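(* Let $\Omega \subseteq \mathbb{R}^n$ be open, let $F \in C^1(\Omega,\mathbb{R}^n)$, and fix a vector norm $\|\cdot\|$ on $\mathbb{R}^n$ together with its induced matrix norm. Assume there are nonnegative numbers $K, L, M$ such that for all $x, y \in \Omega$, $F'(x)$ is nonsingular and \[ \|F'(x)^{-1}\| \le K, \qquad \|F'(x)-F'(y)\| \le L\|x-y\|, \qquad \|F'(x)\| \le M. \] Let $z \in \Omega$ satisfy $F(z)=0$. Define $g(x) = x - F'(x)^{-1}F(x)$ for $x \in \Omega$. Let $x_k \in \Omega$ be such that the line segment $\{t x_k + (1-t) z : t\in[0,1]\}$ is contained in $\Omega$, let $D_k \in \mathbb{R}^{n\times n}$ be a diagonal matrix and $E_k \in \mathbb{R}^{n\times n}$ any matrix, and define \[ x_{k+1} = (I + D_k)\Big( g(x_k) - E_k F'(x_k)^{-1}F(x_k) \Big). \] Then \[ x_{k+1} - z = g(x_k) - z - E_kF'(x_k)^{-1}F(x_k) + D_k\big[ g(x_k) - E_kF'(x_k)^{-1}F(x_k)\big] \] and \[ \|x_{k+1}-z\| \le \tfrac12 LK\|x_k-z\|^2 + \|E_k\|KM\|x_k-z\| + \|D_k\|\Big( \|z\| + \tfrac12 LK\|x_k-z\|^2 + \|E_k\|KM\|x_k-z\| \Big). \]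
   Context: $F'$ denotes the Jacobian of $F$ and $I$ the $n\times n$ identity matrix. The iteration models a quasi-Newton method in finite precision: $D_k$ represents rounding error in the subtraction and $E_k$ represents the relative discrepancy between the computed correction and the exact Newton correction $F'(x_k)^{-1}F(x_k)$. *)

theory Defs
  imports "HOL-Analysis.Analysis"
begin

definition is_vec_norm :: "(real^'n \<Rightarrow> real) \<Rightarrow> bool" where
  "is_vec_norm N \<longleftrightarrow>
     (\<forall>x. 0 \<le> N x) \<and> (\<forall>x. N x = 0 \<longleftrightarrow> x = 0) \<and>
     (\<forall>c x. N (c *s x) = \<bar>c\<bar> * N x) \<and> (\<forall>x y. N (x + y) \<le> N x + N y)"

definition induced_norm :: "(real^'n \<Rightarrow> real) \<Rightarrow> real^'n^'n \<Rightarrow> real" where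
  "induced_norm N A = (SUP x\<in>{x. x \<noteq> 0}. N (A *v x) / N x)"

definition is_diagonal :: "real^'n^'n \<Rightarrow> bool" where
  "is_diagonal A \<longleftrightarrow> (\<forall>i j. i \<noteq> j \<longrightarrow> A $ i $ j = 0)"

end

theory Submission
  imports Defs
begin


lemma vn_basic:
  assumes "is_vec_norm N"
  shows "N 0 = 0" "\<And>x. 0 \<le> N x" "\<And>c x. N (c *\<^sub>R x) = \<bar>c\<bar> * N x"
    "\<And>x y. N (x + y) \<le> N x + N y" "\<And>x. N (- x) = N x" "\<And>x. x \<noteq> 0 \<Longrightarrow> 0 < N x"
    "\<And>x y. N (x - y) = N (y - x)"
proof -
  show a: "N 0 = 0" "\<And>x. 0 \<le> N x" "\<And>x y. N (x + y) \<le> N x + N y"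
    using assms unfolding is_vec_norm_def by auto
  show b: "\<And>c x. N (c *\<^sub>R x) = \<bar>c\<bar> * N x"
    using assms unfolding is_vec_norm_def scalar_mult_eq_scaleR by auto
  show "\<And>x. N (- x) = N x" using b[of "-1"] by simp
  then show "\<And>x y. N (x - y) = N (y - x)" by (metis minus_diff_eq)
  show "\<And>x. x \<noteq> 0 \<Longrightarrow> 0 < N x" using assms unfolding is_vec_norm_def
    by (metis less_eq_real_def)
qed

lemma vn_sum:
  assumes "is_vec_norm N" "finite S"
  shows "N (sum f S) \<le> sum (\<lambda>i. N (f i)) S"
  using assms(2)
proof (induction S rule: finite_induct)
  case empty then show ?case using vn_basic[OF assms(1)] by simp
next
  case (insert x F)
  then show ?case using vn_basic(4)[OF assms(1), of "f x" "sum f F"] by simp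
qed

lemma vn_upper:
  fixes N :: "real^'n \<Rightarrow> real"
  assumes "is_vec_norm N"
  obtains C where "C > 0" "\<And>x. N x \<le> C * norm x"
proof -
  define C where "C = (\<Sum>i\<in>UNIV. N (axis i 1 :: real^'n)) + 1"
  have nn: "\<And>x. 0 \<le> N x" using vn_basic[OF assms] by auto
  have "C > 0" unfolding C_def using nn by (simp add: sum_nonneg add_nonneg_pos)
  moreover have "N x \<le> C * norm x" for x
  proof -
    have "N x = N (\<Sum>i\<in>UNIV. (x$i) *\<^sub>R axis i 1)"
      using basis_expansion[of x] by (simp add: scalar_mult_eq_scaleR)
    also have "\<dots> \<le> (\<Sum>i\<in>UNIV. N ((x$i) *\<^sub>R axis i 1))" by (rule vn_sum[OF assms]) simp
    also have "\<dots> = (\<Sum>i\<in>UNIV. \<bar>x$i\<bar> * N (axis i 1))" using vn_basic(3)[OF assms] by simp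
    also have "\<dots> \<le> (\<Sum>i\<in>UNIV. norm x * N (axis i 1))"
      by (rule sum_mono, rule mult_right_mono[OF component_le_norm_cart nn])
    also have "\<dots> = norm x * (C - 1)" unfolding C_def by (simp add: sum_distrib_left)
    also have "\<dots> \<le> C * norm x" by (simp add: algebra_simps)
    finally show ?thesis .
  qed
  ultimately show ?thesis using that by blast
qed

lemma vn_lower:
  fixes N :: "real^'n \<Rightarrow> real"
  assumes "is_vec_norm N"
  obtains c where "c > 0" "\<And>x. c * norm x \<le> N x"
proof -
  obtain C where C: "C > 0" "\<And>x. N x \<le> C * norm x" using vn_upper[OF assms] by blast
  have lip: "\<bar>N x - N y\<bar> \<le> C * dist x y" for x y
  proof -
    have "N x \<le> N y + N (x - y)" using vn_basic(4)[OF assms, of y "x - y"] by simp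
    moreover have "N y \<le> N x + N (y - x)" using vn_basic(4)[OF assms, of x "y - x"] by simp
    moreover have "N (y - x) = N (x - y)" using vn_basic(7)[OF assms] by simp
    ultimately have "\<bar>N x - N y\<bar> \<le> N (x - y)" by linarith
    also have "\<dots> \<le> C * dist x y" using C(2) by (simp add: dist_norm)
    finally show ?thesis .
  qed
  have cont: "continuous_on UNIV N"
    unfolding continuous_on_iff
  proof (intro ballI allI impI)
    fix x :: "real^'n" and e :: real assume "e > 0"
    show "\<exists>d>0. \<forall>x'\<in>UNIV. dist x' x < d \<longrightarrow> dist (N x') (N x) < e"
    proof (intro exI[of _ "e / C"] conjI ballI impI)
      show "e / C > 0" using \<open>e > 0\<close> C by simp
      fix y assume "dist y x < e / C"
      then have "C * dist y x < e" using C by (simp add: field_simps)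
      then show "dist (N y) (N x) < e" using lip[of y x] by (simp add: dist_real_def)
    qed
  qed
  have ne: "sphere (0::real^'n) 1 \<noteq> {}" by simp
  obtain x0 where x0: "x0 \<in> sphere 0 1" "\<And>y. y \<in> sphere 0 1 \<Longrightarrow> N x0 \<le> N y"
    using continuous_attains_inf[OF compact_sphere ne continuous_on_subset[OF cont]] by blast
  have "x0 \<noteq> 0" using x0(1) by auto
  then have pos: "N x0 > 0" using vn_basic(6)[OF assms] by blast
  have "N x0 * norm x \<le> N x" for x
  proof (cases "x = 0")
    case True then show ?thesis using vn_basic(1)[OF assms] by simp
  next
    case False
    have "(1 / norm x) *\<^sub>R x \<in> sphere 0 1" using False by (simp add: norm_scaleR)
    then have "N x0 \<le> N ((1 / norm x) *\<^sub>R x)" by (rule x0(2))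
    also have "\<dots> = N x / norm x" using vn_basic(3)[OF assms] by simp
    finally show ?thesis using False by (simp add: field_simps)
  qed
  then show ?thesis using that pos by blast
qed

lemma ind_bound:
  fixes N :: "real^'n \<Rightarrow> real" and A :: "real^'n^'n"
  assumes "is_vec_norm N"
  shows "N (A *v x) \<le> induced_norm N A * N x" "0 \<le> induced_norm N A"
proof -
  obtain C where C: "C > 0" "\<And>x. N x \<le> C * norm x" using vn_upper[OF assms] by blast
  obtain c where c: "c > 0" "\<And>x. c * norm x \<le> N x" using vn_lower[OF assms] by blast
  obtain B where B: "B > 0" "\<And>x. norm (A *v x) \<le> norm x * B"
    using bounded_linear.pos_bounded[OF matrix_vector_mul_bounded_linear[of A]] by blast
  have nn: "\<And>x. 0 \<le> N x" using vn_basic[OF assms] by auto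
  have bdd: "bdd_above ((\<lambda>x. N (A *v x) / N x) ` {x. x \<noteq> 0})"
  proof (rule bdd_aboveI2)
    fix x :: "real^'n" assume "x \<in> {x. x \<noteq> 0}"
    then have x: "x \<noteq> 0" by simp
    then have Np: "N x > 0" using vn_basic(6)[OF assms] by blast
    have "N (A *v x) \<le> C * (norm x * B)" using C(2)[of "A *v x"] B(2)[of x] C(1)
      by (meson mult_left_mono order_trans less_imp_le)
    also have "\<dots> \<le> (C * B / c) * N x"
    proof -
      have "norm x \<le> N x / c" using c x by (simp add: field_simps mult.commute)
      then have "C * (norm x * B) \<le> C * (N x / c * B)" using C(1) B(1)
        by (intro mult_left_mono mult_right_mono) auto
      then show ?thesis by (simp add: field_simps)
    qed
    finally show "N (A *v x) / N x \<le> C * B / c" using Np by (simp add: divide_le_eq)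
  qed
  obtain i :: 'n where True by simp
  have ax: "(axis i 1 :: real^'n) \<in> {x. x \<noteq> 0}" by (simp add: axis_eq_0_iff)
  show "0 \<le> induced_norm N A" unfolding induced_norm_def
    by (rule cSUP_upper2[OF bdd ax]) (simp add: nn)
  show "N (A *v x) \<le> induced_norm N A * N x"
  proof (cases "x = 0")
    case True then show ?thesis using vn_basic(1)[OF assms] by simp
  next
    case False
    then have Np: "N x > 0" using vn_basic(6)[OF assms] by blast
    have "N (A *v x) / N x \<le> induced_norm N A" unfolding induced_norm_def
      by (rule cSUP_upper[OF _ bdd]) (use False in simp)
    then show ?thesis using Np by (simp add: divide_le_eq)
  qed
qed


lemma vn_dual:
  fixes N :: "real^'n \<Rightarrow> real"
  assumes nv: "is_vec_norm N"
  obtains b where "\<And>w. b \<bullet> w \<le> N w" "b \<bullet> v = N v"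
proof (cases "v = 0")
  case True
  show ?thesis by (rule that[of 0]) (use vn_basic[OF nv] True in auto)
next
  case False
  have Nv: "N v > 0" using vn_basic(6)[OF nv] False by blast
  define u where "u = (1 / N v) *\<^sub>R v"
  have Nu: "N u = 1" unfolding u_def using vn_basic(3)[OF nv] Nv by simp
  define S where "S = (\<lambda>w. w - u) ` {w. N w < 1}"
  have cvx0: "convex {w. N w < 1}"
    unfolding convex_def
  proof (intro ballI allI impI, simp)
    fix x y :: "real^'n" and s t :: real
    assume xy: "N x < 1" "N y < 1" "0 \<le> s" "0 \<le> t" "s + t = 1"
    have "N (s *\<^sub>R x + t *\<^sub>R y) \<le> s * N x + t * N y"
      using vn_basic(4)[OF nv, of "s *\<^sub>R x" "t *\<^sub>R y"] vn_basic(3)[OF nv] xy by simp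
    also have "\<dots> < 1"
    proof (cases "s = 0")
      case True then show ?thesis using xy by simp
    next
      case False
      then have "s * N x < s" using xy by simp
      moreover have "t * N y \<le> t" using xy by (simp add: mult_left_le)
      ultimately show ?thesis using xy by linarith
    qed
    finally show "N (s *\<^sub>R x + t *\<^sub>R y) < 1" .
  qed
  have "convex S" unfolding S_def
    by (rule convex_translation_subtract[OF cvx0])
  moreover have "0 \<notin> S" unfolding S_def using Nu by auto
  ultimately obtain a where a: "a \<noteq> 0" "\<And>x. x \<in> S \<Longrightarrow> 0 \<le> a \<bullet> x"
    using separating_hyperplane_set_0 by blast
  define b0 where "b0 = - a"
  have b0: "b0 \<bullet> w \<le> b0 \<bullet> u" if "N w < 1" for w
    using a(2)[of "w - u"] that unfolding S_def b0_def by (auto simp: inner_diff_right)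
  have bu0: "0 \<le> b0 \<bullet> u" using b0[of 0] vn_basic(1)[OF nv] by simp
  have key: "b0 \<bullet> w \<le> (b0 \<bullet> u) * N w" for w
  proof (rule ccontr)
    assume ng: "\<not> ?thesis"
    then have w0: "w \<noteq> 0" using vn_basic(1)[OF nv] by auto
    then have Nw: "N w > 0" using vn_basic(6)[OF nv] by blast
    have bw: "b0 \<bullet> w > 0" using ng bu0 Nw
      by (metis mult_nonneg_nonneg not_le order_le_less_trans less_imp_le)
    define r where "r = (b0 \<bullet> u) * N w / (b0 \<bullet> w)"
    have r: "0 \<le> r" "r < 1" unfolding r_def using bw bu0 Nw ng by (auto simp: divide_simps)
    define s where "s = (r + 1) / 2"
    have s: "r < s" "s < 1" "0 < s" using r unfolding s_def by auto
    have "N ((s / N w) *\<^sub>R w) = s" using vn_basic(3)[OF nv] Nw s by simp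
    then have "b0 \<bullet> ((s / N w) *\<^sub>R w) \<le> b0 \<bullet> u" using b0[of "(s / N w) *\<^sub>R w"] s by linarith
    then have "s * (b0 \<bullet> w) \<le> (b0 \<bullet> u) * N w" using Nw by (simp add: field_simps)
    then have "s \<le> r" unfolding r_def using bw by (simp add: field_simps)
    then show False using s by simp
  qed
  have bu: "0 < b0 \<bullet> u"
  proof (rule ccontr)
    assume "\<not> ?thesis"
    then have "b0 \<bullet> b0 \<le> 0" using key[of b0] vn_basic(2)[OF nv, of b0] bu0 by simp
    then have "b0 = 0" by (metis inner_eq_zero_iff inner_ge_zero order_antisym)
    then show False using a(1) unfolding b0_def by simp
  qed
  define b where "b = (1 / (b0 \<bullet> u)) *\<^sub>R b0"
  show ?thesis
  proof (rule that[of b])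
    fix w show "b \<bullet> w \<le> N w" using key[of w] bu unfolding b_def by (simp add: field_simps)
  next
    have "v = N v *\<^sub>R u" unfolding u_def using Nv by simp
    then have "b \<bullet> v = N v * (b \<bullet> u)" by (metis inner_scaleR_right)
    also have "b \<bullet> u = 1" unfolding b_def using bu by simp
    finally show "b \<bullet> v = N v" by simp
  qed
qed

lemma vn_mvt:
  fixes N :: "real^'n \<Rightarrow> real" and f f' :: "real \<Rightarrow> real^'n"
  assumes nv: "is_vec_norm N"
    and fd: "\<And>t. 0 \<le> t \<Longrightarrow> t \<le> 1 \<Longrightarrow> (f has_vector_derivative f' t) (at t)"
    and gd: "\<And>t. 0 \<le> t \<Longrightarrow> t \<le> 1 \<Longrightarrow> (g has_real_derivative g' t) (at t)"
    and bd: "\<And>t. 0 \<le> t \<Longrightarrow> t \<le> 1 \<Longrightarrow> N (f' t) \<le> g' t"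
  shows "N (f 1 - f 0) \<le> g 1 - g 0"
proof -
  obtain b where b: "\<And>w. b \<bullet> w \<le> N w" "b \<bullet> (f 1 - f 0) = N (f 1 - f 0)"
    using vn_dual[OF nv] by blast
  have "(\<lambda>t. b \<bullet> f t - g t) 1 \<le> (\<lambda>t. b \<bullet> f t - g t) 0"
  proof (rule DERIV_nonpos_imp_nonincreasing[of 0 1])
    fix t :: real assume t: "0 \<le> t" "t \<le> 1"
    have "((\<lambda>t. b \<bullet> f t) has_real_derivative b \<bullet> f' t) (at t)"
      using fd[OF t] unfolding has_vector_derivative_def has_field_derivative_def
      by (auto intro!: derivative_eq_intros simp: mult.commute)
    then have "((\<lambda>t. b \<bullet> f t - g t) has_real_derivative b \<bullet> f' t - g' t) (at t)"
      using gd[OF t] by (intro derivative_intros)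
    moreover have "b \<bullet> f' t - g' t \<le> 0" using b(1)[of "f' t"] bd[OF t] by simp
    ultimately show "\<exists>y. ((\<lambda>t. b \<bullet> f t - g t) has_real_derivative y) (at t) \<and> y \<le> 0" by blast
  qed simp
  then show ?thesis using b(2) by (simp add: inner_diff_right)
qed



theorem theorem1:
  fixes \<Omega> :: "(real^'n) set"
    and F :: "real^'n \<Rightarrow> real^'n"
    and J :: "real^'n \<Rightarrow> real^'n^'n"
    and N :: "real^'n \<Rightarrow> real"
    and K L M :: real
    and z xk :: "real^'n"
    and Dk Ek :: "real^'n^'n"
  assumes "open \<Omega>"
    and deriv: "\<forall>x\<in>\<Omega>. (F has_derivative (\<lambda>h. J x *v h)) (at x)"
    and C1: "continuous_on \<Omega> J"
    and norm: "is_vec_norm N"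
    and "0 \<le> K" "0 \<le> L" "0 \<le> M"
    and inv: "\<forall>x\<in>\<Omega>. invertible (J x)"
    and Kb: "\<forall>x\<in>\<Omega>. induced_norm N (matrix_inv (J x)) \<le> K"
    and Lb: "\<forall>x\<in>\<Omega>. \<forall>y\<in>\<Omega>. induced_norm N (J x - J y) \<le> L * N (x - y)"
    and Mb: "\<forall>x\<in>\<Omega>. induced_norm N (J x) \<le> M"
    and "z \<in> \<Omega>" "F z = 0"
    and "xk \<in> \<Omega>"
    and seg: "{t *\<^sub>R xk + (1 - t) *\<^sub>R z | t. t \<in> {0..1}} \<subseteq> \<Omega>"
    and "is_diagonal Dk"
  shows "let g = (\<lambda>x. x - matrix_inv (J x) *v F x);
             xk1 = (mat 1 + Dk) *v (g xk - Ek *v (matrix_inv (J xk) *v F xk))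
         in xk1 - z = g xk - z - Ek *v (matrix_inv (J xk) *v F xk)
                      + Dk *v (g xk - Ek *v (matrix_inv (J xk) *v F xk))
          \<and> N (xk1 - z) \<le> 1/2 * L * K * (N (xk - z))^2
                          + induced_norm N Ek * K * M * N (xk - z)
                          + induced_norm N Dk * (N z + 1/2 * L * K * (N (xk - z))^2
                                + induced_norm N Ek * K * M * N (xk - z))"
  proof -
  have nv: "is_vec_norm N" by (rule norm)
  note vb = vn_basic[OF nv]
  define h where "h = xk - z"
  define r where "r = N h"
  define p where "p = (\<lambda>t::real. z + t *\<^sub>R h)"
  have pin: "p t \<in> \<Omega>" if "0 \<le> t" "t \<le> 1" for t
  proof -
    have "p t = t *\<^sub>R xk + (1 - t) *\<^sub>R z" unfolding p_def h_def by (simp add: algebra_simps)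
    then show ?thesis using seg that by auto
  qed
  have p1: "p 1 = xk" and p0: "p 0 = z" unfolding p_def h_def by simp_all
  have Fd: "((\<lambda>t. F (p t)) has_vector_derivative J (p t) *v h) (at t)" if "0 \<le> t" "t \<le> 1" for t
  proof -
    have pd: "(p has_derivative (\<lambda>x. x *\<^sub>R h)) (at t)" unfolding p_def
      by (auto intro!: derivative_eq_intros)
    have "((\<lambda>t. F (p t)) has_derivative (\<lambda>x. J (p t) *v (x *\<^sub>R h))) (at t)"
      using has_derivative_compose[OF pd deriv[rule_format, OF pin[OF that]]] by (simp add: o_def)
    then show ?thesis unfolding has_vector_derivative_def
      by (simp add: matrix_vector_mult_scaleR)
  qed
  have rnn: "0 \<le> r" unfolding r_def using vb by simp
  have B1: "N (F xk) \<le> M * r"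
  proof -
    have "N ((\<lambda>t. F (p t)) 1 - (\<lambda>t. F (p t)) 0) \<le> (\<lambda>t. M * r * t) 1 - (\<lambda>t. M * r * t) 0"
    proof (rule vn_mvt[OF nv])
      fix t :: real assume t: "0 \<le> t" "t \<le> 1"
      show "((\<lambda>t. F (p t)) has_vector_derivative J (p t) *v h) (at t)" by (rule Fd[OF t])
      show "((\<lambda>t. M * r * t) has_real_derivative M * r) (at t)"
        by (auto intro!: derivative_eq_intros)
      have "N (J (p t) *v h) \<le> induced_norm N (J (p t)) * r"
        unfolding r_def by (rule ind_bound(1)[OF nv])
      also have "\<dots> \<le> M * r" using Mb pin[OF t] rnn by (simp add: mult_right_mono)
      finally show "N (J (p t) *v h) \<le> M * r" .
    qed
    then show ?thesis using p1 p0 \<open>F z = 0\<close> by simp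
  qed
  have B2: "N (J xk *v h - F xk) \<le> L / 2 * r^2"
  proof -
    let ?f = "\<lambda>t. F (p t) - t *\<^sub>R (J xk *v h)"
    let ?g = "\<lambda>t. - (L / 2 * r^2 * (1 - t)^2)"
    have "N (?f 1 - ?f 0) \<le> ?g 1 - ?g 0"
    proof (rule vn_mvt[OF nv])
      fix t :: real assume t: "0 \<le> t" "t \<le> 1"
      have lin: "((\<lambda>t. t *\<^sub>R (J xk *v h)) has_vector_derivative (J xk *v h)) (at t)"
        unfolding has_vector_derivative_def by (auto intro!: derivative_eq_intros)
      show "(?f has_vector_derivative (J (p t) - J xk) *v h) (at t)"
        using has_vector_derivative_diff[OF Fd[OF t] lin]
        by (simp add: matrix_vector_mult_diff_rdistrib)
      show "(?g has_real_derivative L * r^2 * (1 - t)) (at t)"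
        by (auto intro!: derivative_eq_intros simp: power2_eq_square algebra_simps)
      have "N ((J (p t) - J xk) *v h) \<le> induced_norm N (J (p t) - J xk) * r"
        unfolding r_def by (rule ind_bound(1)[OF nv])
      also have "\<dots> \<le> L * N (p t - xk) * r"
        using Lb pin[OF t] \<open>xk \<in> \<Omega>\<close> rnn by (simp add: mult_right_mono)
      also have "N (p t - xk) = (1 - t) * r"
      proof -
        have "p t - xk = (t - 1) *\<^sub>R h" unfolding p_def h_def by (simp add: algebra_simps)
        then show ?thesis unfolding r_def using vb(3) t by simp
      qed
      finally show "N ((J (p t) - J xk) *v h) \<le> L * r^2 * (1 - t)"
        by (simp add: power2_eq_square algebra_simps)
    qed
    moreover have "?f 1 - ?f 0 = F xk - J xk *v h" using p1 p0 \<open>F z = 0\<close> by simp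
    ultimately have "N (F xk - J xk *v h) \<le> L / 2 * r^2" using p1 p0 \<open>F z = 0\<close> by simp
    then show ?thesis using vb(7)[of "F xk" "J xk *v h"] by simp
  qed
  define Ji where "Ji = matrix_inv (J xk)"
  define q where "q = Ek *v (Ji *v F xk)"
  define gx where "gx = xk - Ji *v F xk"
  have JiJ: "Ji ** J xk = mat 1" unfolding Ji_def using someI_ex[OF inv[rule_format, OF \<open>xk \<in> \<Omega>\<close>, unfolded invertible_def]]
    unfolding matrix_inv_def by blast
  have gz: "gx - z = Ji *v (J xk *v h - F xk)"
    unfolding gx_def h_def
    by (simp add: matrix_vector_mult_diff_distrib matrix_vector_mul_assoc JiJ)
  have iE: "0 \<le> induced_norm N Ek" "0 \<le> induced_norm N Dk" using ind_bound(2)[OF nv] by auto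
  have KJ: "induced_norm N Ji \<le> K" unfolding Ji_def using Kb \<open>xk \<in> \<Omega>\<close> by simp
  define a where "a = N (gx - z)"
  define e where "e = N q"
  have a: "a \<le> 1/2 * L * K * r^2"
  proof -
    have "a \<le> induced_norm N Ji * N (J xk *v h - F xk)" unfolding a_def gz by (rule ind_bound(1)[OF nv])
    also have "\<dots> \<le> K * (L / 2 * r^2)"
      using KJ B2 \<open>0 \<le> K\<close> vb(2) by (meson mult_mono order_trans)
    finally show ?thesis by (simp add: algebra_simps)
  qed
  have e: "e \<le> induced_norm N Ek * K * M * r"
  proof -
    have "e \<le> induced_norm N Ek * N (Ji *v F xk)" unfolding e_def q_def by (rule ind_bound(1)[OF nv])
    also have "N (Ji *v F xk) \<le> induced_norm N Ji * N (F xk)" by (rule ind_bound(1)[OF nv])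
    also have "\<dots> \<le> K * (M * r)" using KJ B1 \<open>0 \<le> K\<close> vb(2) by (meson mult_mono order_trans)
    finally show ?thesis using iE by (simp add: mult_left_mono mult.assoc)
  qed
  define w where "w = gx - q"
  have eq: "(mat 1 + Dk) *v w - z = gx - z - q + Dk *v w"
    unfolding w_def by (simp add: matrix_vector_mult_add_rdistrib)
  have Nwz: "N (w - z) \<le> a + e"
    unfolding a_def e_def w_def using vb(4)[of "gx - z" "- q"] vb(5)[of q] by (simp add: algebra_simps)
  have Nw: "N w \<le> N z + a + e" using vb(4)[of z "w - z"] Nwz by simp
  have ND: "N (Dk *v w) \<le> induced_norm N Dk * (N z + a + e)"
    using ind_bound(1)[OF nv, of Dk w] Nw iE(2) by (meson mult_left_mono order_trans)
  have "N ((mat 1 + Dk) *v w - z) \<le> a + e + induced_norm N Dk * (N z + a + e)"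
  proof -
    have "gx - z - q = w - z" unfolding w_def by (simp add: algebra_simps)
    then have "N ((mat 1 + Dk) *v w - z) = N ((w - z) + Dk *v w)" by (simp only: eq)
    also have "\<dots> \<le> N (w - z) + N (Dk *v w)" by (rule vb(4))
    finally show ?thesis using Nwz ND by linarith
  qed
  also have "\<dots> \<le> 1/2 * L * K * r^2 + induced_norm N Ek * K * M * r
       + induced_norm N Dk * (N z + 1/2 * L * K * r^2 + induced_norm N Ek * K * M * r)"
    using a e iE(2) by (intro add_mono mult_left_mono) auto
  finally have fin: "N ((mat 1 + Dk) *v w - z) \<le> 1/2 * L * K * r^2 + induced_norm N Ek * K * M * r
       + induced_norm N Dk * (N z + 1/2 * L * K * r^2 + induced_norm N Ek * K * M * r)" .
  show ?thesis
    unfolding Let_def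
    unfolding Ji_def[symmetric]
    unfolding q_def[symmetric]
    unfolding gx_def[symmetric]
    unfolding w_def[symmetric]
    unfolding h_def[symmetric]
    unfolding r_def[symmetric]
    using eq fin by blast
qed

end
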